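(* Under the standing assumptions for the $M=1$ system (see context), the following identities hold for all $s>0$: (i) $\xi_1=\eta_0-e_1$; (ii) $x_0y_0+x_1y_1=0$; (iii) $\eta_1+\xi_0=e_2$; (iv) $s\,x_0y_1=-\eta_0\xi_1+\eta_0+\xi_0-\eta_1-e_2$; (v) $\eta_0x_0y_0+(\eta_1-\xi_0-s)x_0y_1+x_1y_0-\xi_1x_1y_1+\eta_0=0$.
   Context: Fix complex parameters $\nu_0,\nu_1$ and put $e_1=\nu_0+\nu_1$, $e_2=\nu_0\nu_1$. Let $x_0,x_1,y_0,y_1,\xi_0,\xi_1,\eta_0,\eta_1$ be smooth complex-valued functions of $s\in(0,\infty)$ satisfying, with $'=d/ds$, the system $s x_0'=-\eta_0x_0-x_1$, $s x_1'=-\eta_1x_0+sx_0+\xi_0x_0+\xi_1x_1$, $s y_1'=-\xi_1y_1+y_0$, $s y_0'=-\xi_0y_1-sy_1+\eta_0y_0+\eta_1y_1$, $\xi_0'=x_0y_0$, $\xi_1'=x_0y_1$, $\eta_0'=x_0y_1$, $\eta_1'=x_1y_1$, together with the boundary behaviour as $s\to0^+$: $\xi_0\to e_2$, $\xi_1\to-e_1$, $\eta_0\to0$, $\eta_1\to0$, and $x_j(s)y_k(s)\to0$ for all $j,k\in\{0,1\}$. (These are the variables of Strahov's Hamiltonian system describing the gap probability of the $M=1$ hard-edge kernel on $(0,s)$, with Hamiltonian $H=-\eta_0x_0y_0+(\xi_0-\eta_1+s)x_0y_1-x_1y_0+\xi_1x_1y_1$ and gap probability $\exp\int_0^s\eta_0(t)\,dt/t$.)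 *)

theory Defs
  imports "HOL-Analysis.Analysis"
begin

end

theory Submission
  imports Defs
begin


lemma const_from_limit:
  fixes f :: "real \<Rightarrow> complex"
  assumes d: "\<And>s. s > 0 \<Longrightarrow> (f has_vector_derivative 0) (at s)"
    and l: "(f \<longlongrightarrow> L) (at_right 0)" and t: "t > 0"
  shows "f t = L"
proof -
  obtain c where c: "\<And>x. x \<in> {0<..} \<Longrightarrow> f x = c"
    by (rule has_vector_derivative_zero_constant[of "{0<..}" f])
       (auto intro: has_vector_derivative_at_within d)
  have ev: "\<forall>\<^sub>F x in at_right (0::real). f x = c"
    by (simp add: eventually_at_right_less c eventually_mono[OF eventually_at_right_less])
  have "((\<lambda>x. c) \<longlongrightarrow> L) (at_right (0::real))"
    using tendsto_cong[OF ev] l by simp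
  then have "c = L" by (simp add: tendsto_const_iff)
  with c t show ?thesis by simp
qed

theorem mainTheorem1:
  fixes \<nu>0 \<nu>1 e1 e2 :: complex
    and x0 x1 y0 y1 \<xi>0 \<xi>1 \<eta>0 \<eta>1 :: "real \<Rightarrow> complex"
  assumes e1_def: "e1 = \<nu>0 + \<nu>1"
    and e2_def: "e2 = \<nu>0 * \<nu>1"
    and dx0: "\<And>s. s > 0 \<Longrightarrow> (x0 has_vector_derivative
        ((- \<eta>0 s * x0 s - x1 s) / of_real s)) (at s)"
    and dx1: "\<And>s. s > 0 \<Longrightarrow> (x1 has_vector_derivative
        ((- \<eta>1 s * x0 s + of_real s * x0 s + \<xi>0 s * x0 s + \<xi>1 s * x1 s) / of_real s)) (at s)"
    and dy1: "\<And>s. s > 0 \<Longrightarrow> (y1 has_vector_derivative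
        ((- \<xi>1 s * y1 s + y0 s) / of_real s)) (at s)"
    and dy0: "\<And>s. s > 0 \<Longrightarrow> (y0 has_vector_derivative
        ((- \<xi>0 s * y1 s - of_real s * y1 s + \<eta>0 s * y0 s + \<eta>1 s * y1 s) / of_real s)) (at s)"
    and d\<xi>0: "\<And>s. s > 0 \<Longrightarrow> (\<xi>0 has_vector_derivative (x0 s * y0 s)) (at s)"
    and d\<xi>1: "\<And>s. s > 0 \<Longrightarrow> (\<xi>1 has_vector_derivative (x0 s * y1 s)) (at s)"
    and d\<eta>0: "\<And>s. s > 0 \<Longrightarrow> (\<eta>0 has_vector_derivative (x0 s * y1 s)) (at s)"
    and d\<eta>1: "\<And>s. s > 0 \<Longrightarrow> (\<eta>1 has_vector_derivative (x1 s * y1 s)) (at s)"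
    and lim\<xi>0: "(\<xi>0 \<longlongrightarrow> e2) (at_right 0)"
    and lim\<xi>1: "(\<xi>1 \<longlongrightarrow> - e1) (at_right 0)"
    and lim\<eta>0: "(\<eta>0 \<longlongrightarrow> 0) (at_right 0)"
    and lim\<eta>1: "(\<eta>1 \<longlongrightarrow> 0) (at_right 0)"
    and lim00: "((\<lambda>s. x0 s * y0 s) \<longlongrightarrow> 0) (at_right 0)"
    and lim01: "((\<lambda>s. x0 s * y1 s) \<longlongrightarrow> 0) (at_right 0)"
    and lim10: "((\<lambda>s. x1 s * y0 s) \<longlongrightarrow> 0) (at_right 0)"
    and lim11: "((\<lambda>s. x1 s * y1 s) \<longlongrightarrow> 0) (at_right 0)"
  shows "\<forall>s>0. \<xi>1 s = \<eta>0 s - e1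
    \<and> x0 s * y0 s + x1 s * y1 s = 0
    \<and> \<eta>1 s + \<xi>0 s = e2
    \<and> of_real s * x0 s * y1 s = - \<eta>0 s * \<xi>1 s + \<eta>0 s + \<xi>0 s - \<eta>1 s - e2
    \<and> \<eta>0 s * x0 s * y0 s + (\<eta>1 s - \<xi>0 s - of_real s) * x0 s * y1 s + x1 s * y0 s
          - \<xi>1 s * x1 s * y1 s + \<eta>0 s = 0"
proof (intro allI impI)
  fix t :: real assume t: "t > 0"
  define P00 where "P00 = (\<lambda>s. x0 s * y0 s)"
  define P01 where "P01 = (\<lambda>s. x0 s * y1 s)"
  define P10 where "P10 = (\<lambda>s. x1 s * y0 s)"
  define P11 where "P11 = (\<lambda>s. x1 s * y1 s)"
  have dP00: "\<And>s. s > 0 \<Longrightarrow> (P00 has_vector_derivative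
      (x0 s * ((- \<xi>0 s * y1 s - of_real s * y1 s + \<eta>0 s * y0 s + \<eta>1 s * y1 s) / of_real s)
       + ((- \<eta>0 s * x0 s - x1 s) / of_real s) * y0 s)) (at s)"
    unfolding P00_def by (rule has_vector_derivative_mult[OF dx0 dy0])
  have dP01: "\<And>s. s > 0 \<Longrightarrow> (P01 has_vector_derivative
      (x0 s * ((- \<xi>1 s * y1 s + y0 s) / of_real s)
       + ((- \<eta>0 s * x0 s - x1 s) / of_real s) * y1 s)) (at s)"
    unfolding P01_def by (rule has_vector_derivative_mult[OF dx0 dy1])
  have dP10: "\<And>s. s > 0 \<Longrightarrow> (P10 has_vector_derivative
      (x1 s * ((- \<xi>0 s * y1 s - of_real s * y1 s + \<eta>0 s * y0 s + \<eta>1 s * y1 s) / of_real s)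
       + ((- \<eta>1 s * x0 s + of_real s * x0 s + \<xi>0 s * x0 s + \<xi>1 s * x1 s) / of_real s) * y0 s)) (at s)"
    unfolding P10_def by (rule has_vector_derivative_mult[OF dx1 dy0])
  have dP11: "\<And>s. s > 0 \<Longrightarrow> (P11 has_vector_derivative
      (x1 s * ((- \<xi>1 s * y1 s + y0 s) / of_real s)
       + ((- \<eta>1 s * x0 s + of_real s * x0 s + \<xi>0 s * x0 s + \<xi>1 s * x1 s) / of_real s) * y1 s)) (at s)"
    unfolding P11_def by (rule has_vector_derivative_mult[OF dx1 dy1])
  have dS: "((\<lambda>s. complex_of_real s) has_vector_derivative 1) (at s)" for s :: real
    using has_vector_derivative_of_real[OF DERIV_ident] by simp
  have i: "\<xi>1 t - \<eta>0 t = - e1"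
  proof (rule const_from_limit[where f="\<lambda>s. \<xi>1 s - \<eta>0 s"])
    show "\<And>s. s > 0 \<Longrightarrow> ((\<lambda>s. \<xi>1 s - \<eta>0 s) has_vector_derivative 0) (at s)"
      using has_vector_derivative_diff[OF d\<xi>1 d\<eta>0] by simp
    show "((\<lambda>s. \<xi>1 s - \<eta>0 s) \<longlongrightarrow> - e1) (at_right 0)"
      using tendsto_diff[OF lim\<xi>1 lim\<eta>0] by simp
  qed (rule t)
  have ii_all: "P00 s + P11 s = 0" if s: "s > 0" for s
  proof (rule const_from_limit[where f="\<lambda>s. P00 s + P11 s"])
    show "((\<lambda>s. P00 s + P11 s) has_vector_derivative 0) (at s)" if "s > 0" for s
    proof -
      have ne: "complex_of_real s \<noteq> 0" using that by simp
      have "((\<lambda>s. P00 s + P11 s) has_vector_derivative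
        ((x0 s * ((- \<xi>0 s * y1 s - of_real s * y1 s + \<eta>0 s * y0 s + \<eta>1 s * y1 s) / of_real s)
         + ((- \<eta>0 s * x0 s - x1 s) / of_real s) * y0 s) +
        (x1 s * ((- \<xi>1 s * y1 s + y0 s) / of_real s)
         + ((- \<eta>1 s * x0 s + of_real s * x0 s + \<xi>0 s * x0 s + \<xi>1 s * x1 s) / of_real s) * y1 s))) (at s)"
        by (rule has_vector_derivative_add[OF dP00[OF that] dP11[OF that]])
      moreover have "(x0 s * ((- \<xi>0 s * y1 s - of_real s * y1 s + \<eta>0 s * y0 s + \<eta>1 s * y1 s) / of_real s)
         + ((- \<eta>0 s * x0 s - x1 s) / of_real s) * y0 s) +
        (x1 s * ((- \<xi>1 s * y1 s + y0 s) / of_real s)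
         + ((- \<eta>1 s * x0 s + of_real s * x0 s + \<xi>0 s * x0 s + \<xi>1 s * x1 s) / of_real s) * y1 s) = 0"
        using ne by (simp add: field_simps; simp add: algebra_simps)
      ultimately show ?thesis by simp
    qed
    show "((\<lambda>s. P00 s + P11 s) \<longlongrightarrow> 0) (at_right 0)"
      using tendsto_add[OF lim00 lim11] unfolding P00_def P11_def by simp
  qed (rule s)
  have ii: "x0 t * y0 t + x1 t * y1 t = 0" using ii_all[OF t] unfolding P00_def P11_def by simp
  have iii: "\<eta>1 t + \<xi>0 t = e2"
  proof (rule const_from_limit[where f="\<lambda>s. \<eta>1 s + \<xi>0 s"])
    show "((\<lambda>s. \<eta>1 s + \<xi>0 s) has_vector_derivative 0) (at s)" if "s > 0" for s
      using has_vector_derivative_add[OF d\<eta>1[OF that] d\<xi>0[OF that]] ii_all[OF that]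
      unfolding P00_def P11_def by (simp add: add.commute)
    show "((\<lambda>s. \<eta>1 s + \<xi>0 s) \<longlongrightarrow> e2) (at_right 0)"
      using tendsto_add[OF lim\<eta>1 lim\<xi>0] by simp
  qed (rule t)
  have iv: "of_real t * P01 t + \<eta>0 t * \<xi>1 t - \<eta>0 t - \<xi>0 t + \<eta>1 t = - e2"
  proof (rule const_from_limit[where f="\<lambda>s. of_real s * P01 s + \<eta>0 s * \<xi>1 s - \<eta>0 s - \<xi>0 s + \<eta>1 s"])
    show "((\<lambda>s. of_real s * P01 s + \<eta>0 s * \<xi>1 s - \<eta>0 s - \<xi>0 s + \<eta>1 s) has_vector_derivative 0) (at s)" if "s > 0" for s
    proof -
      have ne: "complex_of_real s \<noteq> 0" using that by simp
      have "((\<lambda>s. of_real s * P01 s + \<eta>0 s * \<xi>1 s - \<eta>0 s - \<xi>0 s + \<eta>1 s) has_vector_derivative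
         ((of_real s * (x0 s * ((- \<xi>1 s * y1 s + y0 s) / of_real s)
           + ((- \<eta>0 s * x0 s - x1 s) / of_real s) * y1 s) + 1 * P01 s)
          + (\<eta>0 s * (x0 s * y1 s) + (x0 s * y1 s) * \<xi>1 s) - x0 s * y1 s - x0 s * y0 s + x1 s * y1 s)) (at s)"
        by (intro has_vector_derivative_add has_vector_derivative_diff has_vector_derivative_mult
            dS dP01[OF that] d\<eta>0[OF that] d\<xi>1[OF that] d\<xi>0[OF that] d\<eta>1[OF that])
      moreover have "(of_real s * (x0 s * ((- \<xi>1 s * y1 s + y0 s) / of_real s)
           + ((- \<eta>0 s * x0 s - x1 s) / of_real s) * y1 s) + 1 * P01 s)
          + (\<eta>0 s * (x0 s * y1 s) + (x0 s * y1 s) * \<xi>1 s) - x0 s * y1 s - x0 s * y0 s + x1 s * y1 s = 0"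
        using ne unfolding P01_def by (simp add: field_simps; simp add: algebra_simps)
      ultimately show ?thesis by simp
    qed
    have "((\<lambda>s. of_real s * P01 s + \<eta>0 s * \<xi>1 s - \<eta>0 s - \<xi>0 s + \<eta>1 s) \<longlongrightarrow>
        0 * 0 + 0 * (- e1) - 0 - e2 + 0) (at_right 0)"
      unfolding P01_def
      by (intro tendsto_intros lim01 lim\<eta>0 lim\<xi>1 lim\<xi>0 lim\<eta>1)
         (auto intro: tendsto_eq_intros tendsto_ident_at)
    then show "((\<lambda>s. of_real s * P01 s + \<eta>0 s * \<xi>1 s - \<eta>0 s - \<xi>0 s + \<eta>1 s) \<longlongrightarrow> - e2) (at_right 0)"
      by simp
  qed (rule t)
  define V where "V = (\<lambda>s. \<eta>0 s * P00 s + (\<eta>1 s - \<xi>0 s - of_real s) * P01 s + P10 s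
          - \<xi>1 s * P11 s + \<eta>0 s)"
  have v: "V t = 0"
  proof (rule const_from_limit[where f=V])
    show "(V has_vector_derivative 0) (at s)" if "s > 0" for s
    proof -
      have ne: "complex_of_real s \<noteq> 0" using that by simp
      have "(V has_vector_derivative
         ((\<eta>0 s * (x0 s * ((- \<xi>0 s * y1 s - of_real s * y1 s + \<eta>0 s * y0 s + \<eta>1 s * y1 s) / of_real s)
       + ((- \<eta>0 s * x0 s - x1 s) / of_real s) * y0 s) + x0 s * y1 s * P00 s)
         + ((\<eta>1 s - \<xi>0 s - of_real s) * (x0 s * ((- \<xi>1 s * y1 s + y0 s) / of_real s)
       + ((- \<eta>0 s * x0 s - x1 s) / of_real s) * y1 s) + (x1 s * y1 s - x0 s * y0 s - 1) * P01 s)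
         + (x1 s * ((- \<xi>0 s * y1 s - of_real s * y1 s + \<eta>0 s * y0 s + \<eta>1 s * y1 s) / of_real s)
       + ((- \<eta>1 s * x0 s + of_real s * x0 s + \<xi>0 s * x0 s + \<xi>1 s * x1 s) / of_real s) * y0 s)
         - (\<xi>1 s * (x1 s * ((- \<xi>1 s * y1 s + y0 s) / of_real s)
       + ((- \<eta>1 s * x0 s + of_real s * x0 s + \<xi>0 s * x0 s + \<xi>1 s * x1 s) / of_real s) * y1 s) + x0 s * y1 s * P11 s)
         + x0 s * y1 s)) (at s)"
        unfolding V_def
        by (intro has_vector_derivative_add has_vector_derivative_diff has_vector_derivative_mult
            dS dP00[OF that] dP01[OF that] dP10[OF that] dP11[OF that]
            d\<eta>0[OF that] d\<xi>1[OF that] d\<xi>0[OF that] d\<eta>1[OF that])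
      moreover have "(\<eta>0 s * (x0 s * ((- \<xi>0 s * y1 s - of_real s * y1 s + \<eta>0 s * y0 s + \<eta>1 s * y1 s) / of_real s)
       + ((- \<eta>0 s * x0 s - x1 s) / of_real s) * y0 s) + x0 s * y1 s * P00 s)
         + ((\<eta>1 s - \<xi>0 s - of_real s) * (x0 s * ((- \<xi>1 s * y1 s + y0 s) / of_real s)
       + ((- \<eta>0 s * x0 s - x1 s) / of_real s) * y1 s) + (x1 s * y1 s - x0 s * y0 s - 1) * P01 s)
         + (x1 s * ((- \<xi>0 s * y1 s - of_real s * y1 s + \<eta>0 s * y0 s + \<eta>1 s * y1 s) / of_real s)
       + ((- \<eta>1 s * x0 s + of_real s * x0 s + \<xi>0 s * x0 s + \<xi>1 s * x1 s) / of_real s) * y0 s)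
         - (\<xi>1 s * (x1 s * ((- \<xi>1 s * y1 s + y0 s) / of_real s)
       + ((- \<eta>1 s * x0 s + of_real s * x0 s + \<xi>0 s * x0 s + \<xi>1 s * x1 s) / of_real s) * y1 s) + x0 s * y1 s * P11 s)
         + x0 s * y1 s = 0"
        using ne unfolding P00_def P01_def P11_def by (simp add: field_simps; simp add: algebra_simps)
      ultimately show ?thesis by simp
    qed
    have "(V \<longlongrightarrow> 0 * 0 + (0 - e2 - 0) * 0 + 0 - (- e1) * 0 + 0) (at_right 0)"
      unfolding V_def P00_def P01_def P10_def P11_def
      by (intro tendsto_intros lim00 lim01 lim10 lim11 lim\<eta>0 lim\<xi>1 lim\<xi>0 lim\<eta>1)
         (auto intro: tendsto_eq_intros tendsto_ident_at)
    then show "(V \<longlongrightarrow> 0) (at_right 0)" by simp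
  qed (rule t)
  show "\<xi>1 t = \<eta>0 t - e1
    \<and> x0 t * y0 t + x1 t * y1 t = 0
    \<and> \<eta>1 t + \<xi>0 t = e2
    \<and> of_real t * x0 t * y1 t = - \<eta>0 t * \<xi>1 t + \<eta>0 t + \<xi>0 t - \<eta>1 t - e2
    \<and> \<eta>0 t * x0 t * y0 t + (\<eta>1 t - \<xi>0 t - of_real t) * x0 t * y1 t + x1 t * y0 t
          - \<xi>1 t * x1 t * y1 t + \<eta>0 t = 0"
    using i ii iii iv v unfolding V_def P00_def P01_def P10_def P11_def
    by (auto simp: algebra_simps)
qed

end
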